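(* Let $A_n$ be the set of binary words of length $n$ that contain no $3$-antipower as a factor, and let $k \geq 6$. Then \begin{itemize} \item $A_{3k} = \mathcal{C}_{3k}\left(0^* \cup (01)^* \cup (01)^* 0 \cup 0^*10^* \cup 0^*011 \cup 0^*101\right)$, \item $A_{3k+1} = \mathcal{C}_{3k+1}\left(0^* \cup (01)^* \cup (01)^* 0 \cup 0^*10^* \cup 0^*011 \cup 0^*101 \cup 10^*1\right)$, \item $A_{3k+2} = \mathcal{C}_{3k+2}\left(0^* \cup (01)^* \cup (01)^* 0 \cup 0^*10^* \cup 0^*011 \cup 0^*101 \cup 10^*1 \cup 10^*10 \cup 10^*11\right)$. \end{itemize} In particular, for $k \geq 6$ there are exactly $6k+12$ (resp. $6k+16$, $6k+26$) binary words of length $3k$ (resp. $3k+1$, $3k+2$) avoiding $3$-antipowers.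
   Context: Words are over $\{0,1\}$. A $3$-antipower is a word $u_1u_2u_3$ with $|u_1|=|u_2|=|u_3|$ and $u_1,u_2,u_3$ pairwise distinct; a factor is a contiguous subword; a word avoids $3$-antipowers if it has no $3$-antipower as a factor. For a word $w$, $w^* = \{\varepsilon, w, w^2, \dots\}$, and sets of words are written as regular expressions. For a language $L \subseteq \{0,1\}^*$, $\mathcal{C}_n(L)$ denotes the closure of $L \cap \{0,1\}^n$ under bitwise complementation (exchanging $0$ and $1$) and reversal; i.e., it consists of all length-$n$ words of $L$, their bitwise complements, their reversals, and the bitwise complements of their reversals. *)

theory Defs
  imports Main "HOL-Library.Sublist"
begin

text \<open>Binary words over {0,1} are represented as bool lists, with False = 0 and True = 1.\<close>

definition antipower3 :: "bool list \<Rightarrow> bool" where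
  "antipower3 w \<longleftrightarrow> (\<exists>u1 u2 u3. w = u1 @ u2 @ u3 \<and>
      length u1 = length u2 \<and> length u2 = length u3 \<and>
      u1 \<noteq> u2 \<and> u1 \<noteq> u3 \<and> u2 \<noteq> u3)"

text \<open>A factor is a contiguous subword: the library predicate sublist.\<close>
definition avoids_antipower3 :: "bool list \<Rightarrow> bool" where
  "avoids_antipower3 w \<longleftrightarrow> \<not> (\<exists>v. sublist v w \<and> antipower3 v)"

definition A :: "nat \<Rightarrow> bool list set" where
  "A n = {w. length w = n \<and> avoids_antipower3 w}"

definition complement :: "bool list \<Rightarrow> bool list" where
  "complement w = map Not w"

definition Cl :: "nat \<Rightarrow> bool list set \<Rightarrow> bool list set" where
  "Cl n L = (let S = {w \<in> L. length w = n} in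
      S \<union> complement ` S \<union> rev ` S \<union> (complement \<circ> rev) ` S)"

definition pow :: "bool list \<Rightarrow> nat \<Rightarrow> bool list" where
  "pow w m = concat (replicate m w)"

abbreviation (input) b0 where "b0 \<equiv> False"
abbreviation (input) b1 where "b1 \<equiv> True"

definition "L_0s = {pow [b0] m | m. True}"
definition "L_01s = {pow [b0,b1] m | m. True}"
definition "L_01s0 = {pow [b0,b1] m @ [b0] | m. True}"
definition "L_0s10s = {pow [b0] i @ [b1] @ pow [b0] j | i j. True}"
definition "L_0s011 = {pow [b0] i @ [b0,b1,b1] | i. True}"
definition "L_0s101 = {pow [b0] i @ [b1,b0,b1] | i. True}"
definition "L_10s1 = {[b1] @ pow [b0] i @ [b1] | i. True}"
definition "L_10s10 = {[b1] @ pow [b0] i @ [b1,b0] | i. True}"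
definition "L_10s11 = {[b1] @ pow [b0] i @ [b1,b1] | i. True}"

definition "Lang0 = L_0s \<union> L_01s \<union> L_01s0 \<union> L_0s10s \<union> L_0s011 \<union> L_0s101"
definition "Lang1 = Lang0 \<union> L_10s1"
definition "Lang2 = Lang1 \<union> L_10s10 \<union> L_10s11"

end

theory Submission
  imports Defs
begin

definition apl :: "nat \<Rightarrow> bool list \<Rightarrow> bool" where
  "apl l w \<longleftrightarrow> take l w \<noteq> take l (drop l w) \<and> take l w \<noteq> drop (2*l) w \<and> take l (drop l w) \<noteq> drop (2*l) w"

lemma ap_char: "antipower3 w \<longleftrightarrow> (\<exists>l. length w = 3*l \<and> apl l w)"
proof
  assume "antipower3 w"
  then obtain u1 u2 u3 where w: "w = u1 @ u2 @ u3" "length u1 = length u2" "length u2 = length u3"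
    "u1 \<noteq> u2" "u1 \<noteq> u3" "u2 \<noteq> u3" unfolding antipower3_def by blast
  then show "\<exists>l. length w = 3*l \<and> apl l w"
    by (intro exI[of _ "length u1"]) (auto simp: apl_def)
next
  assume "\<exists>l. length w = 3*l \<and> apl l w"
  then obtain l where l: "length w = 3*l" "apl l w" by blast
  have "w = take l w @ take l (drop l w) @ drop (2*l) w"
    by (metis append_take_drop_id drop_drop mult_2 add.commute)
  then show "antipower3 w" unfolding antipower3_def using l
    by (intro exI[of _ "take l w"] exI[of _ "take l (drop l w)"] exI[of _ "drop (2*l) w"]) (auto simp: apl_def)
qed

lemma suffix_ap: "(\<exists>s. suffix s w \<and> antipower3 s) \<longleftrightarrow> (\<exists>l\<in>{1..length w div 3}. apl l (drop (length w - 3*l) w))"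
proof
  assume "\<exists>s. suffix s w \<and> antipower3 s"
  then obtain s l where s: "suffix s w" "length s = 3*l" "apl l s" using ap_char by blast
  have "s = drop (length w - 3*l) w" using s(1,2) by (auto simp: suffix_def)
  moreover have "l \<ge> 1" using s(3) by (cases l) (auto simp: apl_def)
  moreover have "3*l \<le> length w" using s(1,2) by (auto simp: suffix_def)
  ultimately show "\<exists>l\<in>{1..length w div 3}. apl l (drop (length w - 3*l) w)" using s by auto
next
  assume "\<exists>l\<in>{1..length w div 3}. apl l (drop (length w - 3*l) w)"
  then obtain l where l: "l \<le> length w div 3" "apl l (drop (length w - 3*l) w)" by auto
  then show "\<exists>s. suffix s w \<and> antipower3 s" unfolding ap_char
    by (intro exI[of _ "drop (length w - 3*l) w"]) (auto simp: suffix_drop)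
qed

lemma avoids_snoc: "avoids_antipower3 (x @ [c]) \<longleftrightarrow> avoids_antipower3 x \<and>
   \<not> (\<exists>l\<in>{1..length (x@[c]) div 3}. apl l (drop (length (x@[c]) - 3*l) (x@[c])))"
  unfolding avoids_antipower3_def suffix_ap[symmetric] sublist_snoc by blast

lemma avoids_Nil: "avoids_antipower3 []"
  unfolding avoids_antipower3_def antipower3_def by auto

definition nosuf :: "bool list \<Rightarrow> bool" where
  "nosuf v = list_all (\<lambda>l. \<not> apl l (drop (length v - 3*l) v)) [1..<length v div 3 + 1]"

definition stepL :: "bool list list \<Rightarrow> bool list list" where
  "stepL L = filter nosuf (concat (map (\<lambda>x. [x@[False], x@[True]]) L))"

lemma A_0: "A 0 = set [[]]"
  using avoids_Nil by (auto simp: A_def)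

lemma A_stepL: assumes "A n = set L" shows "A (Suc n) = set (stepL L)"
proof -
  have "v \<in> A (Suc n) \<longleftrightarrow> v \<in> set (stepL L)" for v
  proof (cases v rule: rev_cases)
    case Nil then show ?thesis by (auto simp: A_def stepL_def)
  next
    case (snoc x c)
    have ns: "nosuf v \<longleftrightarrow> \<not> (\<exists>l\<in>{1..length v div 3}. apl l (drop (length v - 3*l) v))"
      unfolding nosuf_def list_all_iff by auto
    have "v \<in> set (stepL L) \<longleftrightarrow> x \<in> set L \<and> nosuf v"
      unfolding stepL_def snoc by (cases c) auto
    then show ?thesis using assms unfolding A_def snoc
      by (auto simp: avoids_snoc ns[unfolded snoc])
  qed
  then show ?thesis by blast
qed

lemma A_iter: "A n = set ((stepL ^^ n) [[]])"
  by (induction n) (auto simp: A_0 intro!: A_stepL)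

definition ofl :: "nat \<Rightarrow> nat list \<Rightarrow> bool list" where
  "ofl n P = map (\<lambda>i. i \<in> set P) [0..<n]"

definition altw :: "nat \<Rightarrow> bool \<Rightarrow> bool list" where
  "altw n b = map (\<lambda>i. if even i then b else \<not> b) [0..<n]"

definition Slist :: "nat \<Rightarrow> nat list list" where
  "Slist n = [[]] @ map (\<lambda>i. [i]) [0..<n] @ [[n-2,n-1],[n-3,n-1],[0,1],[0,2]]
     @ (if n mod 3 \<noteq> 0 then [[0,n-1]] else [])
     @ (if n mod 3 = 2 then [[0,n-2],[1,n-1],[0,n-2,n-1],[0,1,n-1]] else [])"

definition Blist :: "nat \<Rightarrow> bool list list" where
  "Blist n = [altw n False, altw n True] @ map (ofl n) (Slist n) @ map (\<lambda>P. map Not (ofl n P)) (Slist n)"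

lemma base12: "set ((stepL ^^ 12) [[]]) = set (Blist 12)"
  by code_simp

definition Badl :: "nat \<Rightarrow> nat list list" where
  "Badl n = [[0,n],[2,n],[1,n],[1,n-1],[0,n-1],[0,n-1,n],[0,n-2],[0,n-2,n],[0,2,n],[0,1,n],[0,1,n-1],[0,1,n-1,n],[1,n-1,n]]"

definition Sl :: "nat \<Rightarrow> nat \<Rightarrow> nat list list" where
  "Sl n r = [[]] @ map (\<lambda>i. [i]) [0..<n] @ [[n-2,n-1],[n-3,n-1],[0,1],[0,2]]
     @ (if r \<noteq> 0 then [[0,n-1]] else [])
     @ (if r = 2 then [[0,n-2],[1,n-1],[0,n-2,n-1],[0,1,n-1]] else [])"

lemma memSl: "P \<in> set (Sl n r) \<longleftrightarrow> P = [] \<or> (\<exists>i<n. P=[i]) \<or> P=[n-2,n-1] \<or> P=[n-3,n-1] \<or> P=[0,1] \<or> P=[0,2]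
   \<or> (r \<noteq> 0 \<and> P=[0,n-1]) \<or> (r = 2 \<and> (P=[0,n-2] \<or> P=[1,n-1] \<or> P=[0,n-2,n-1] \<or> P=[0,1,n-1]))"
  unfolding Sl_def set_append set_map set_upt
  apply (cases "r = 0"; cases "r = 2")
  apply (simp_all add: image_iff atLeast0LessThan)
  apply blast+
  done

lemma memBad: "P \<in> set (Badl n) \<longleftrightarrow> P \<in> {[0,n],[2,n],[1,n],[1,n-1],[0,n-1],[0,n-1,n],[0,n-2],[0,n-2,n],[0,2,n],[0,1,n],[0,1,n-1],[0,1,n-1,n],[1,n-1,n]}"
  by (simp add: Badl_def)

fun sh :: "nat list \<Rightarrow> nat list" where
  "sh [] = []" | "sh (x#xs) = (if x = 0 then sh xs else (x - 1) # sh xs)"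

lemma core2:
  assumes "m \<ge> 9" "P \<in> set (Sl (m+3) 2)"
   "sh (P @ (if c then [m+3] else [])) \<in> set (Sl (m+3) 2)"
  shows "P @ (if c then [m+3] else []) \<in> set (Sl (m+4) 0) \<or> P @ (if c then [m+3] else []) \<in> set (Badl (m+3))"
  using assms(2,3) unfolding memSl memBad
  apply (elim disjE exE conjE)
  apply (cases c; simp; use assms(1) in \<open>auto split: if_splits\<close>)+
  done

lemma core0:
  assumes "m \<ge> 9" "P \<in> set (Sl (m+3) 0)"
   "sh (P @ (if c then [m+3] else [])) \<in> set (Sl (m+3) 0)"
  shows "P @ (if c then [m+3] else []) \<in> set (Sl (m+4) 1)"
  using assms(2,3) unfolding memSl
  apply (elim disjE exE conjE)
  apply (cases c; simp; use assms(1) in \<open>auto split: if_splits\<close>)+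
  done

lemma core1:
  assumes "m \<ge> 9" "P \<in> set (Sl (m+3) 1)"
   "sh (P @ (if c then [m+3] else [])) \<in> set (Sl (m+3) 1)"
  shows "P @ (if c then [m+3] else []) \<in> set (Sl (m+4) 2)"
  using assms(2,3) unfolding memSl
  apply (elim disjE exE conjE)
  apply (cases c; simp; use assms(1) in \<open>auto split: if_splits\<close>)+
  done

lemma Slist_Sl: "Slist n = Sl n (n mod 3)"
  unfolding Slist_def Sl_def by simp

lemma length_ofl[simp]: "length (ofl n P) = n" by (simp add: ofl_def)
lemma length_altw[simp]: "length (altw n b) = n" by (simp add: altw_def)
lemma nth_ofl[simp]: "i < n \<Longrightarrow> ofl n P ! i = (i \<in> set P)" by (simp add: ofl_def)
lemma nth_altw[simp]: "i < n \<Longrightarrow> altw n b ! i = (if even i then b else \<not> b)" by (simp add: altw_def)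

lemma butlast_ofl: "butlast (ofl (Suc n) Q) = ofl n Q"
  by (simp add: ofl_def)

lemma ofl_filter: "ofl n Q = ofl n (filter (\<lambda>p. p < n) Q)"
  by (auto simp: ofl_def)

lemma set_sh: "i \<in> set (sh Q) \<longleftrightarrow> Suc i \<in> set Q"
  by (induction Q rule: sh.induct) auto

lemma tl_ofl: "tl (ofl (Suc n) Q) = ofl n (sh Q)"
proof -
  have "tl (ofl (Suc n) Q) = map (\<lambda>i. i \<in> set Q) [1..<Suc n]"
    unfolding ofl_def by (simp add: map_tl upt_conv_Cons del: upt_Suc)
  also have "\<dots> = map (\<lambda>i. Suc i \<in> set Q) [0..<n]"
    by (simp add: map_Suc_upt[symmetric] del: upt_Suc)
  finally show ?thesis by (simp add: ofl_def set_sh)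
qed

lemma snoc_ofl: "\<forall>p\<in>set P. p < n \<Longrightarrow> ofl n P @ [c] = ofl (Suc n) (P @ (if c then [n] else []))"
  by (auto simp: ofl_def)

lemma ofl_inj:
  assumes "sorted_wrt (<) P" "sorted_wrt (<) P'" "\<forall>p\<in>set P. p < n" "\<forall>p\<in>set P'. p < n"
    "ofl n P = ofl n P'"
  shows "P = P'"
proof -
  have "set P = set P'"
  proof safe
    fix x assume "x \<in> set P"
    then have "x < n" using assms(3) by auto
    then show "x \<in> set P'" using arg_cong[OF assms(5), of "\<lambda>w. w ! x"] \<open>x \<in> set P\<close> by simp
  next
    fix x assume "x \<in> set P'"
    then have "x < n" using assms(4) by auto
    then show "x \<in> set P" using arg_cong[OF assms(5), of "\<lambda>w. w ! x"] \<open>x \<in> set P'\<close> by simp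
  qed
  then show ?thesis using assms(1,2) strict_sorted_equal by metis
qed

lemma sorted_sh: "sorted_wrt (<) Q \<Longrightarrow> sorted_wrt (<) (sh Q)"
proof (induction Q rule: sh.induct)
  case 1 then show ?case by simp
next
  case (2 x xs)
  have "x - 1 < y" if "x > 0" "y \<in> set (sh xs)" for y
  proof -
    have "Suc y \<in> set xs" using that(2) by (simp add: set_sh)
    then have "x < Suc y" using "2.prems" by simp
    then show ?thesis using that(1) by linarith
  qed
  then show ?case using 2 by auto
qed

lemma sh_bound: "\<forall>p\<in>set Q. p < Suc n \<Longrightarrow> \<forall>p\<in>set (sh Q). p < n"
  by (auto simp: set_sh)

lemma Sl_props: "n \<ge> 12 \<Longrightarrow> P \<in> set (Sl n r) \<Longrightarrow> sorted_wrt (<) P \<and> (\<forall>p\<in>set P. p < n) \<and> length P \<le> 3"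
  unfolding memSl by auto

definition ones :: "bool list \<Rightarrow> nat" where "ones w = length (filter id w)"

lemma ones_ofl: "ones (ofl n P) \<le> length P"
proof -
  have "ones (ofl n P) = length (filter (\<lambda>i. i \<in> set P) [0..<n])"
    by (simp add: ones_def ofl_def filter_map comp_def)
  also have "\<dots> = card (set (filter (\<lambda>i. i \<in> set P) [0..<n]))"
    by (rule distinct_card[symmetric]) simp
  also have "\<dots> \<le> card (set P)" by (rule card_mono) auto
  also have "\<dots> \<le> length P" by (rule card_length)
  finally show ?thesis .
qed

lemma ones_Not: "ones (map Not w) = length w - ones w"
proof -
  have "length (filter id w) + length (filter (\<lambda>x. \<not> id x) w) = length w"
    by (rule sum_length_filter_compl)
  then show ?thesis by (simp add: ones_def filter_map comp_def)
qed


lemma ones_altw_eq: "ones (altw n b) = (if b then (n+1) div 2 else n div 2)"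
proof (induction n)
  case 0 then show ?case by (simp add: ones_def altw_def)
next
  case (Suc n)
  have "altw (Suc n) b = altw n b @ [if even n then b else \<not> b]" by (simp add: altw_def)
  then have e: "ones (altw (Suc n) b) = ones (altw n b) + (if (if even n then b else \<not> b) then 1 else 0)"
    by (simp add: ones_def)
  show ?case
  proof (cases "even n")
    case True
    then obtain q where q: "n = 2*q" by (metis evenE)
    show ?thesis using Suc e True unfolding q by (cases b) simp_all
  next
    case False
    then obtain q where q: "n = 2*q+1" by (metis oddE)
    show ?thesis using Suc e False unfolding q by (cases b) simp_all
  qed
qed

lemma ones_altw: "n div 2 \<le> ones (altw n b) \<and> ones (altw n b) \<le> n - n div 2"
proof (cases "even n")
  case True
  then obtain q where q: "n = 2*q" by (metis evenE)
  show ?thesis unfolding ones_altw_eq q by simp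
next
  case False
  then obtain q where q: "n = 2*q+1" by (metis oddE)
  show ?thesis unfolding ones_altw_eq q by simp
qed

lemma ones_append: "ones (xs @ ys) = ones xs + ones ys" by (simp add: ones_def)
lemma ones_single: "ones [c] = (if c then 1 else 0)" by (simp add: ones_def)
lemma ones_Cons: "ones (c # xs) = (if c then 1 else 0) + ones xs" by (simp add: ones_def)

lemma ones_butlast_tl: "v \<noteq> [] \<Longrightarrow> ones (butlast v) \<le> ones (tl v) + 1 \<and> ones (tl v) \<le> ones (butlast v) + 1"
proof -
  assume v: "v \<noteq> []"
  have "ones v = ones (butlast v @ [last v])" using v by simp
  then have a: "ones v = ones (butlast v) + (if last v then 1 else 0)"
    by (simp add: ones_append ones_single)
  have "ones v = ones (hd v # tl v)" using v by simp
  then have b: "ones v = (if hd v then 1 else 0) + ones (tl v)"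
    by (simp add: ones_Cons)
  show ?thesis using a b by (auto split: if_splits)
qed

lemma list_neq_nth: "length xs = l \<Longrightarrow> length ys = l \<Longrightarrow> xs \<noteq> ys \<longleftrightarrow> (\<exists>i<l. xs!i \<noteq> ys!i)"
  by (auto simp: list_eq_iff_nth_eq)

lemma ex_cong_lt: "(\<And>i. i<l \<Longrightarrow> A i = B i) \<Longrightarrow> (\<exists>i<l. A i) \<longleftrightarrow> (\<exists>i<l. B i)" for l and A B :: "nat \<Rightarrow> bool"
  by blast

lemma ex_guard_cong: "(\<And>l. P l \<Longrightarrow> (X l \<longleftrightarrow> Y l)) \<Longrightarrow> (\<exists>l. P l \<and> X l) \<longleftrightarrow> (\<exists>l. P l \<and> Y l)"
  by blast

lemma conj3_cong: "(a \<longleftrightarrow> a') \<Longrightarrow> (b \<longleftrightarrow> b') \<Longrightarrow> (c \<longleftrightarrow> c') \<Longrightarrow> (a \<and> b \<and> c \<longleftrightarrow> a' \<and> b' \<and> c')"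
  by simp

lemma ap_iff: "antipower3 w \<longleftrightarrow> (\<exists>l. length w = 3*l \<and> (\<exists>i<l. w!i \<noteq> w!(l+i)) \<and> (\<exists>i<l. w!i \<noteq> w!(2*l+i)) \<and> (\<exists>i<l. w!(l+i) \<noteq> w!(2*l+i)))"
proof -
  have "apl l w \<longleftrightarrow> (\<exists>i<l. w!i \<noteq> w!(l+i)) \<and> (\<exists>i<l. w!i \<noteq> w!(2*l+i)) \<and> (\<exists>i<l. w!(l+i) \<noteq> w!(2*l+i))"
    if len: "length w = 3*l" for l
  proof -
    have l1: "length (take l w) = l" "length (take l (drop l w)) = l" "length (drop (2*l) w) = l"
      using len by simp_all
    have n1: "take l w ! i = w ! i" "take l (drop l w) ! i = w ! (l+i)" "drop (2*l) w ! i = w ! (2*l+i)"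
      if "i < l" for i using that len by simp_all
    have "take l w \<noteq> take l (drop l w) \<longleftrightarrow> (\<exists>i<l. w!i \<noteq> w!(l+i))"
      unfolding list_neq_nth[OF l1(1,2)] by (rule ex_cong_lt) (simp only: n1)
    moreover have "take l w \<noteq> drop (2*l) w \<longleftrightarrow> (\<exists>i<l. w!i \<noteq> w!(2*l+i))"
      unfolding list_neq_nth[OF l1(1,3)] by (rule ex_cong_lt) (simp only: n1)
    moreover have "take l (drop l w) \<noteq> drop (2*l) w \<longleftrightarrow> (\<exists>i<l. w!(l+i) \<noteq> w!(2*l+i))"
      unfolding list_neq_nth[OF l1(2,3)] by (rule ex_cong_lt) (simp only: n1)
    ultimately show ?thesis unfolding apl_def by (rule conj3_cong)
  qed
  then show ?thesis unfolding ap_char by (rule ex_guard_cong)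
qed

lemma ap_Not: "antipower3 (map Not w) \<longleftrightarrow> antipower3 w"
proof -
  have "(\<exists>i<l. map Not w!i \<noteq> map Not w!(l+i)) \<and> (\<exists>i<l. map Not w!i \<noteq> map Not w!(2*l+i)) \<and> (\<exists>i<l. map Not w!(l+i) \<noteq> map Not w!(2*l+i))
    \<longleftrightarrow> (\<exists>i<l. w!i \<noteq> w!(l+i)) \<and> (\<exists>i<l. w!i \<noteq> w!(2*l+i)) \<and> (\<exists>i<l. w!(l+i) \<noteq> w!(2*l+i))"
    if len: "length w = 3*l" for l
  proof -
    have n: "map Not w ! i = (\<not> w!i)" "map Not w ! (l+i) = (\<not> w!(l+i))" "map Not w ! (2*l+i) = (\<not> w!(2*l+i))"
      if "i < l" for i using that len by simp_all
    show ?thesis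
      by (intro conj3_cong ex_cong_lt; simp only: n; simp)
  qed
  then show ?thesis unfolding ap_iff length_map by (rule ex_guard_cong)
qed

lemma noap_altw: "\<not> antipower3 (altw N b)"
proof
  assume "antipower3 (altw N b)"
  then obtain l i where "N = 3*l" "i < l" "altw N b ! i \<noteq> altw N b ! (2*l+i)"
    unfolding ap_iff by auto
  moreover have "i < N" "2*l+i < N" using calculation by linarith+
  ultimately show False by simp
qed

lemma ap_ofl_iff: "antipower3 (ofl N Q) \<longleftrightarrow> (\<exists>l. N = 3*l \<and> (\<exists>i<l. (i \<in> set Q) \<noteq> (l+i \<in> set Q))
   \<and> (\<exists>i<l. (i \<in> set Q) \<noteq> (2*l+i \<in> set Q)) \<and> (\<exists>i<l. (l+i \<in> set Q) \<noteq> (2*l+i \<in> set Q)))"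
proof -
  have n: "i < l \<Longrightarrow> ofl (3*l) Q ! i = (i \<in> set Q) \<and> ofl (3*l) Q ! (l+i) = (l+i \<in> set Q) \<and> ofl (3*l) Q ! (2*l+i) = (2*l+i \<in> set Q)" for i l
  proof -
    assume "i < l"
    then have "i < 3*l" "l + i < 3*l" "2*l+i < 3*l" by linarith+
    then show ?thesis by simp
  qed
  have e1: "(\<exists>i<l. ofl (3*l) Q ! i \<noteq> ofl (3*l) Q ! (l+i)) \<longleftrightarrow> (\<exists>i<l. (i \<in> set Q) \<noteq> (l+i \<in> set Q))" for l
    by (rule ex_cong_lt) (simp only: n)
  have e2: "(\<exists>i<l. ofl (3*l) Q ! i \<noteq> ofl (3*l) Q ! (2*l+i)) \<longleftrightarrow> (\<exists>i<l. (i \<in> set Q) \<noteq> (2*l+i \<in> set Q))" for l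
    by (rule ex_cong_lt) (simp only: n)
  have e3: "(\<exists>i<l. ofl (3*l) Q ! (l+i) \<noteq> ofl (3*l) Q ! (2*l+i)) \<longleftrightarrow> (\<exists>i<l. (l+i \<in> set Q) \<noteq> (2*l+i \<in> set Q))" for l
    by (rule ex_cong_lt) (simp only: n)
  show ?thesis unfolding ap_iff length_ofl
    by (rule ex_guard_cong) (simp only: e1 e2 e3)
qed

lemma noap_ofl:
  assumes "N \<ge> 13" "Q \<in> set (Slist N)"
  shows "\<not> antipower3 (ofl N Q)"
proof
  assume "antipower3 (ofl N Q)"
  then obtain l where l: "N = 3*l"
    and c1: "\<exists>i<l. (i \<in> set Q) \<noteq> (l+i \<in> set Q)"
    and c2: "\<exists>i<l. (i \<in> set Q) \<noteq> (2*l+i \<in> set Q)"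
    and c3: "\<exists>i<l. (l+i \<in> set Q) \<noteq> (2*l+i \<in> set Q)"
    unfolding ap_ofl_iff by blast
  have d1: "\<exists>q\<in>set Q. q < 2*l"
  proof -
    obtain i where i: "i < l" "(i \<in> set Q) \<noteq> (l+i \<in> set Q)" using c1 by blast
    show ?thesis
    proof (cases "i \<in> set Q")
      case True then show ?thesis using i(1) by (intro bexI[of _ i]) simp_all
    next
      case False then have "l+i \<in> set Q" using i(2) by simp
      then show ?thesis using i(1) by (intro bexI[of _ "l+i"]) simp_all
    qed
  qed
  have d2: "\<exists>q\<in>set Q. q < l \<or> 2*l \<le> q"
  proof -
    obtain i where i: "i < l" "(i \<in> set Q) \<noteq> (2*l+i \<in> set Q)" using c2 by blast
    show ?thesis
    proof (cases "i \<in> set Q")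
      case True then show ?thesis using i(1) by (intro bexI[of _ i]) simp_all
    next
      case False then have "2*l+i \<in> set Q" using i(2) by simp
      then show ?thesis using i(1) by (intro bexI[of _ "2*l+i"]) simp_all
    qed
  qed
  have d3: "\<exists>q\<in>set Q. l \<le> q"
  proof -
    obtain i where i: "i < l" "(l+i \<in> set Q) \<noteq> (2*l+i \<in> set Q)" using c3 by blast
    show ?thesis
    proof (cases "l+i \<in> set Q")
      case True then show ?thesis by (intro bexI[of _ "l+i"]) simp_all
    next
      case False then have "2*l+i \<in> set Q" using i(2) by simp
      then show ?thesis by (intro bexI[of _ "2*l+i"]) simp_all
    qed
  qed
  have "Q \<in> set (Sl N 0)" using assms(2) l by (simp add: Slist_Sl)
  moreover have "l \<ge> 5" using l assms(1) by linarith
  ultimately show False using d1 d2 d3 unfolding memSl l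
    apply (elim disjE exE conjE)
    apply simp_all
    apply (elim disjE; linarith)+
    done
qed

lemma ap_bad:
  assumes "3*l = Suc n" "l \<ge> 5" "Q \<in> set (Badl n)"
  shows "antipower3 (ofl (Suc n) Q)"
proof -
  have c: "hd Q < l \<and> hd Q \<in> set Q \<and> l + hd Q \<notin> set Q \<and> 2*l + hd Q \<notin> set Q \<and> last Q - 2*l < l \<and> l + (last Q - 2*l) \<notin> set Q \<and> 2*l + (last Q - 2*l) \<in> set Q"
  proof -
    have n: "n = 3*l - 1" using assms(1) by linarith
    show ?thesis using assms(3) unfolding memBad n using assms(2)
      by (elim insertE emptyE; simp; presburger)
  qed
  show ?thesis unfolding ap_ofl_iff
    apply (rule exI[of _ l])
    apply (intro conjI)
    subgoal using assms(1) by simp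
    subgoal apply (rule exI[of _ "hd Q"]) using c by simp
    subgoal apply (rule exI[of _ "hd Q"]) using c by simp
    subgoal apply (rule exI[of _ "last Q - 2*l"]) using c by simp
    done
qed

lemma restr0:
  assumes "m \<ge> 9" "Q \<in> set (Sl (m+4) 1)"
  shows "filter (\<lambda>p. p < m+3) Q \<in> set (Sl (m+3) 0) \<and> sh Q \<in> set (Sl (m+3) 0)"
  using assms(2) unfolding memSl
  apply (elim disjE exE conjE)
  apply (simp; use assms(1) in \<open>auto split: if_splits\<close>)+
  done

lemma restr1:
  assumes "m \<ge> 9" "Q \<in> set (Sl (m+4) 2)"
  shows "filter (\<lambda>p. p < m+3) Q \<in> set (Sl (m+3) 1) \<and> sh Q \<in> set (Sl (m+3) 1)"
  using assms(2) unfolding memSl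
  apply (elim disjE exE conjE)
  apply (simp; use assms(1) in \<open>auto split: if_splits\<close>)+
  done

lemma restr2:
  assumes "m \<ge> 9" "Q \<in> set (Sl (m+4) 0)"
  shows "filter (\<lambda>p. p < m+3) Q \<in> set (Sl (m+3) 2) \<and> sh Q \<in> set (Sl (m+3) 2)"
  using assms(2) unfolding memSl
  apply (elim disjE exE conjE)
  apply (simp; use assms(1) in \<open>auto split: if_splits\<close>)+
  done

lemma mod3_cases:
  obtains "n mod 3 = 0" "Suc n mod 3 = 1" | "n mod 3 = 1" "Suc n mod 3 = 2" | "n mod 3 = 2" "Suc n mod 3 = 0"
proof -
  have "(n mod 3 = 0 \<and> Suc n mod 3 = 1) \<or> (n mod 3 = 1 \<and> Suc n mod 3 = 2) \<or> (n mod 3 = 2 \<and> Suc n mod 3 = 0)"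
    by presburger
  then show ?thesis using that by meson
qed

lemma restrict_main:
  assumes "n \<ge> 12" "Q \<in> set (Slist (Suc n))"
  shows "filter (\<lambda>p. p < n) Q \<in> set (Slist n) \<and> sh Q \<in> set (Slist n)"
proof -
  obtain m where m: "n = m + 3" "m \<ge> 9" using assms(1) by (intro that[of "n-3"]) auto
  have s: "Suc n = m + 4" using m by simp
  show ?thesis
  proof (cases rule: mod3_cases[of n])
    case 1 then show ?thesis using restr0[OF m(2)] assms(2) unfolding Slist_Sl s by (simp add: m)
  next
    case 2 then show ?thesis using restr1[OF m(2)] assms(2) unfolding Slist_Sl s by (simp add: m)
  next
    case 3 then show ?thesis using restr2[OF m(2)] assms(2) unfolding Slist_Sl s by (simp add: m)
  qed
qed

lemma core_main:
  assumes "n \<ge> 12" "P \<in> set (Slist n)" "sh (P @ (if c then [n] else [])) \<in> set (Slist n)"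
  shows "P @ (if c then [n] else []) \<in> set (Slist (Suc n)) \<or> (3 dvd Suc n \<and> P @ (if c then [n] else []) \<in> set (Badl n))"
proof -
  obtain m where m: "n = m + 3" "m \<ge> 9" using assms(1) by (intro that[of "n-3"]) auto
  have s: "Suc n = m + 4" using m by simp
  show ?thesis
  proof (cases rule: mod3_cases[of n])
    case 1
    have e1: "Slist n = Sl (m+3) 0" "Slist (Suc n) = Sl (m+4) 1" unfolding Slist_Sl by (simp_all only: 1 flip: m(1) s)
    have P': "P \<in> set (Sl (m+3) 0)" using assms(2) e1 by simp
    have sh': "sh (P @ (if c then [m+3] else [])) \<in> set (Sl (m+3) 0)" using assms(3) e1(1) by (simp only: flip: m(1))
    have "P @ (if c then [m+3] else []) \<in> set (Sl (m+4) 1)" by (rule core0[OF m(2) P' sh'])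
    then have "P @ (if c then [n] else []) \<in> set (Slist (Suc n))" using e1(2) by (simp only: flip: m(1) s)
    then show ?thesis by blast
  next
    case 2
    have e1: "Slist n = Sl (m+3) 1" "Slist (Suc n) = Sl (m+4) 2" unfolding Slist_Sl by (simp_all only: 2 flip: m(1) s)
    have P': "P \<in> set (Sl (m+3) 1)" using assms(2) e1 by simp
    have sh': "sh (P @ (if c then [m+3] else [])) \<in> set (Sl (m+3) 1)" using assms(3) e1(1) by (simp only: flip: m(1))
    have "P @ (if c then [m+3] else []) \<in> set (Sl (m+4) 2)" by (rule core1[OF m(2) P' sh'])
    then have "P @ (if c then [n] else []) \<in> set (Slist (Suc n))" using e1(2) by (simp only: flip: m(1) s)
    then show ?thesis by blast
  next
    case 3
    have d: "3 dvd Suc n" using 3 by presburger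
    have e1: "Slist n = Sl (m+3) 2" "Slist (Suc n) = Sl (m+4) 0" unfolding Slist_Sl by (simp_all only: 3 flip: m(1) s)
    have P': "P \<in> set (Sl (m+3) 2)" using assms(2) e1 by simp
    have sh': "sh (P @ (if c then [m+3] else [])) \<in> set (Sl (m+3) 2)" using assms(3) e1(1) by (simp only: flip: m(1))
    have "P @ (if c then [m+3] else []) \<in> set (Sl (m+4) 0) \<or> P @ (if c then [m+3] else []) \<in> set (Badl (m+3))"
      by (rule core2[OF m(2) P' sh'])
    then have "P @ (if c then [n] else []) \<in> set (Slist (Suc n)) \<or> P @ (if c then [n] else []) \<in> set (Badl n)" using e1(2) by (simp only: flip: m(1) s)
    then show ?thesis using d by blast
  qed
qed

definition B :: "nat \<Rightarrow> bool list set" where "B n = set (Blist n)"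

lemma memB: "w \<in> B n \<longleftrightarrow> w = altw n False \<or> w = altw n True \<or> (\<exists>P\<in>set (Slist n). w = ofl n P) \<or> (\<exists>P\<in>set (Slist n). w = map Not (ofl n P))"
  unfolding B_def Blist_def by auto

lemma butlast_altw: "butlast (altw (Suc n) b) = altw n b"
  by (simp add: altw_def)

lemma tl_altw: "tl (altw (Suc n) b) = altw n (\<not> b)"
proof -
  have "tl (altw (Suc n) b) = map (\<lambda>i. if even i then b else \<not> b) [1..<Suc n]"
    unfolding altw_def by (simp add: map_tl upt_conv_Cons del: upt_Suc)
  also have "\<dots> = map (\<lambda>i. if even (Suc i) then b else \<not> b) [0..<n]"
    by (simp add: map_Suc_upt[symmetric] del: upt_Suc)
  finally show ?thesis by (simp add: altw_def)
qed

lemma Not_altw: "map Not (altw n b) = altw n (\<not> b)"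
  by (simp add: altw_def)

lemma length_B: "w \<in> B n \<Longrightarrow> length w = n"
  unfolding memB by auto

lemma B_Not: "w \<in> B n \<Longrightarrow> map Not w \<in> B n"
  unfolding memB by (auto simp: Not_altw comp_def)

lemma B_restrict:
  assumes "n \<ge> 12" "v \<in> B (Suc n)"
  shows "butlast v \<in> B n \<and> tl v \<in> B n \<and> \<not> antipower3 v"
proof -
  have ofl_case: "butlast (ofl (Suc n) Q) \<in> B n \<and> tl (ofl (Suc n) Q) \<in> B n \<and> \<not> antipower3 (ofl (Suc n) Q)"
    if Q: "Q \<in> set (Slist (Suc n))" for Q
  proof -
    have r: "filter (\<lambda>p. p < n) Q \<in> set (Slist n)" "sh Q \<in> set (Slist n)" using restrict_main[OF assms(1) Q] by auto
    have "butlast (ofl (Suc n) Q) = ofl n (filter (\<lambda>p. p < n) Q)" by (simp add: butlast_ofl ofl_filter[symmetric])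
    moreover have "tl (ofl (Suc n) Q) = ofl n (sh Q)" by (rule tl_ofl)
    moreover have "\<not> antipower3 (ofl (Suc n) Q)" using noap_ofl[OF _ Q] assms(1) by simp
    ultimately show ?thesis using r unfolding memB by blast
  qed
  from assms(2) consider (a) b where "v = altw (Suc n) b" | (o) Q where "Q \<in> set (Slist (Suc n))" "v = ofl (Suc n) Q"
    | (no) Q where "Q \<in> set (Slist (Suc n))" "v = map Not (ofl (Suc n) Q)"
    unfolding memB by blast
  then show ?thesis
  proof cases
    case a then show ?thesis by (simp add: butlast_altw tl_altw noap_altw memB) (cases b; simp)
  next
    case o then show ?thesis using ofl_case by simp
  next
    case no
    have e: "butlast v = map Not (butlast (ofl (Suc n) Q))" "tl v = map Not (tl (ofl (Suc n) Q))"
      unfolding no(2) by (simp_all add: map_butlast map_tl)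
    show ?thesis using ofl_case[OF no(1)] B_Not unfolding e by (simp add: no(2) ap_Not)
  qed
qed

lemma step_ofl:
  assumes "n \<ge> 12" "length v = Suc n" "butlast v = ofl n P" "P \<in> set (Slist n)"
    "tl v = ofl n P'" "P' \<in> set (Slist n)" "\<not> antipower3 v"
  shows "\<exists>Q\<in>set (Slist (Suc n)). v = ofl (Suc n) Q"
proof -
  define Q where "Q = P @ (if last v then [n] else [])"
  have v0: "v \<noteq> []" using assms(2) by auto
  have Pp: "sorted_wrt (<) P" "\<forall>p\<in>set P. p < n" using Sl_props[OF assms(1), of P "n mod 3"] assms(4) by (auto simp: Slist_Sl)
  have P'p: "sorted_wrt (<) P'" "\<forall>p\<in>set P'. p < n" using Sl_props[OF assms(1), of P' "n mod 3"] assms(6) by (auto simp: Slist_Sl)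
  have vQ: "v = ofl (Suc n) Q"
  proof -
    have "v = butlast v @ [last v]" using v0 by simp
    also have "\<dots> = ofl (Suc n) Q" unfolding assms(3) Q_def by (rule snoc_ofl[OF Pp(2)])
    finally show ?thesis .
  qed
  have Qs: "sorted_wrt (<) Q" "\<forall>p\<in>set Q. p < Suc n"
    using Pp unfolding Q_def by (auto simp: sorted_wrt_append)
  have "ofl n (sh Q) = ofl n P'" using assms(5) vQ tl_ofl by metis
  then have shQ: "sh Q = P'"
    using ofl_inj[OF sorted_sh[OF Qs(1)] P'p(1) sh_bound[OF Qs(2)] P'p(2)] by blast
  have "Q \<in> set (Slist (Suc n)) \<or> (3 dvd Suc n \<and> Q \<in> set (Badl n))"
    using core_main[OF assms(1,4), of "last v"] shQ assms(6) unfolding Q_def by simp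
  moreover have "\<not> (3 dvd Suc n \<and> Q \<in> set (Badl n))"
  proof
    assume h: "3 dvd Suc n \<and> Q \<in> set (Badl n)"
    then obtain l where l: "Suc n = 3*l" by blast
    have "l \<ge> 5" using l assms(1) by linarith
    then have "antipower3 (ofl (Suc n) Q)" using ap_bad[of l n Q] l h by simp
    then show False using assms(7) vQ by simp
  qed
  ultimately show ?thesis using vQ by blast
qed

lemma B_class:
  assumes "n \<ge> 12" "w \<in> B n"
  shows "(\<exists>b. w = altw n b \<and> 6 \<le> ones w \<and> ones w + 6 \<le> n) \<or> (\<exists>P\<in>set (Slist n). w = ofl n P \<and> ones w \<le> 3)
     \<or> (\<exists>P\<in>set (Slist n). w = map Not (ofl n P) \<and> n \<le> ones w + 3)"
proof -
  have alt: "6 \<le> ones (altw n b) \<and> ones (altw n b) + 6 \<le> n" for b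
    using ones_altw[of n b] assms(1) by linarith
  have P3: "length P \<le> 3" if "P \<in> set (Slist n)" for P
    using Sl_props[OF assms(1), of P "n mod 3"] that by (simp add: Slist_Sl)
  have o1: "ones (ofl n P) \<le> 3" if "P \<in> set (Slist n)" for P
    using ones_ofl[of n P] P3[OF that] by linarith
  have o2: "n \<le> ones (map Not (ofl n P)) + 3" if "P \<in> set (Slist n)" for P
    using o1[OF that] ones_Not[of "ofl n P"] by simp
  from assms(2) show ?thesis unfolding memB using alt o1 o2 by blast
qed

lemma step3:
  assumes "n \<ge> 12" "length v = Suc n" "butlast v \<in> B n" "tl v \<in> B n" "\<not> antipower3 v"
  shows "v \<in> B (Suc n)"
proof -
  have v0: "v \<noteq> []" using assms(2) by auto
  have ob: "ones (butlast v) \<le> ones (tl v) + 1" "ones (tl v) \<le> ones (butlast v) + 1"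
    using ones_butlast_tl[OF v0] by auto
  note cb = B_class[OF assms(1,3)]
  note ct = B_class[OF assms(1,4)]
  from cb consider (a) b where "butlast v = altw n b" "6 \<le> ones (butlast v)" "ones (butlast v) + 6 \<le> n"
    | (o) P where "P \<in> set (Slist n)" "butlast v = ofl n P" "ones (butlast v) \<le> 3"
    | (no) P where "P \<in> set (Slist n)" "butlast v = map Not (ofl n P)" "n \<le> ones (butlast v) + 3"
    by blast
  then show ?thesis
  proof cases
    case a
    from ct consider (c1) b' where "tl v = altw n b'" | (c2) "ones (tl v) \<le> 3" | (c3) "n \<le> ones (tl v) + 3"
      by blast
    then obtain b' where b': "tl v = altw n b'"
    proof cases
      case c2 then have False using a(2,3) ob by linarith then show ?thesis by blast
    next
      case c3 then have False using a(2,3) ob by linarith then show ?thesis by blast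
    qed blast
    have l1: "length (butlast v) = n" "length (tl v) = n" using assms(2) by simp_all
    have nb: "v ! i = (if even i then b else \<not> b)" if "i < n" for i
    proof -
      have "v ! i = butlast v ! i" using that l1 by (simp add: nth_butlast)
      then show ?thesis using a(1) that by simp
    qed
    have nt: "v ! Suc i = (if even i then b' else \<not> b')" if "i < n" for i
    proof -
      have "v ! Suc i = tl v ! i" using that l1 by (simp add: nth_tl)
      then show ?thesis using b' that by simp
    qed
    have "b' = (\<not> b)" using nb[of 1] nt[of 0] assms(1) by simp
    have "v = altw (Suc n) b"
    proof (rule nth_equalityI)
      show "length v = length (altw (Suc n) b)" using assms(2) by simp
    next
      fix i assume "i < length v"
      then have i: "i < Suc n" using assms(2) by simp
      show "v ! i = altw (Suc n) b ! i"
      proof (cases "i < n")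
        case True then show ?thesis using nb i by simp
      next
        case False
        then have "i = Suc (n - 1)" using i assms(1) by simp
        then show ?thesis using nt[of "n-1"] assms(1) \<open>b' = (\<not> b)\<close> i by (cases "even n") auto
      qed
    qed
    then show ?thesis unfolding memB by (cases b) auto
  next
    case o
    from ct consider (c1) "6 \<le> ones (tl v)" | (c2) P' where "P' \<in> set (Slist n)" "tl v = ofl n P'" | (c3) "n \<le> ones (tl v) + 3"
      by blast
    then obtain P' where P': "P' \<in> set (Slist n)" "tl v = ofl n P'"
    proof cases
      case c1 then have False using o(3) ob by linarith then show ?thesis by blast
    next
      case c3 then have False using o(3) ob assms(1) by linarith then show ?thesis by blast
    qed blast
    obtain Q where "Q \<in> set (Slist (Suc n))" "v = ofl (Suc n) Q"
      using step_ofl[OF assms(1,2) o(2,1) P'(2,1) assms(5)] by blast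
    then show ?thesis unfolding memB by blast
  next
    case no
    define v' where "v' = map Not v"
    have bv': "butlast v' = ofl n P" unfolding v'_def using no(2) by (simp add: map_butlast[symmetric] comp_def)
    have tv': "tl v' \<in> B n" unfolding v'_def using B_Not[OF assms(4)] by (simp add: map_tl[symmetric])
    have obv': "ones (butlast v') \<le> 3" using ones_ofl[of n P] Sl_props[OF assms(1), of P "n mod 3"] no(1) bv'
      by (simp add: Slist_Sl)
    have v'0: "v' \<noteq> []" using v0 v'_def by simp
    have ob': "ones (tl v') \<le> ones (butlast v') + 1" using ones_butlast_tl[OF v'0] by auto
    from B_class[OF assms(1) tv'] consider (c1) "6 \<le> ones (tl v')" | (c2) P' where "P' \<in> set (Slist n)" "tl v' = ofl n P'" | (c3) "n \<le> ones (tl v') + 3"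
      by blast
    then obtain P' where P': "P' \<in> set (Slist n)" "tl v' = ofl n P'"
    proof cases
      case c1 then have False using obv' ob' by linarith then show ?thesis by blast
    next
      case c3 then have False using obv' ob' assms(1) by linarith then show ?thesis by blast
    qed blast
    have "\<not> antipower3 v'" unfolding v'_def ap_Not by (rule assms(5))
    moreover have "length v' = Suc n" using assms(2) v'_def by simp
    ultimately obtain Q where "Q \<in> set (Slist (Suc n))" "v' = ofl (Suc n) Q"
      using step_ofl[OF assms(1) _ bv' no(1) P'(2,1)] by blast
    moreover have "v = map Not v'" unfolding v'_def by (simp add: comp_def)
    ultimately show ?thesis unfolding memB by blast
  qed
qed

lemma sub3: "sublist u v \<Longrightarrow> u = v \<or> sublist u (butlast v) \<or> sublist u (tl v)"
proof -
  assume "sublist u v"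
  then obtain p s where v: "v = p @ u @ s" unfolding sublist_def by blast
  show ?thesis
  proof (cases "s = []")
    case False
    then have "butlast v = p @ u @ butlast s" unfolding v by (simp add: butlast_append)
    then show ?thesis unfolding sublist_def by blast
  next
    case True
    show ?thesis
    proof (cases "p = []")
      case True then show ?thesis using \<open>s = []\<close> v by simp
    next
      case False
      then have "tl v = tl p @ u @ s" unfolding v by simp
      then show ?thesis unfolding sublist_def by blast
    qed
  qed
qed

lemma A_Suc: "v \<in> A (Suc n) \<longleftrightarrow> length v = Suc n \<and> butlast v \<in> A n \<and> tl v \<in> A n \<and> \<not> antipower3 v"
proof
  assume "v \<in> A (Suc n)"
  then have l: "length v = Suc n" and av: "avoids_antipower3 v" unfolding A_def by auto
  have "avoids_antipower3 (butlast v)" using av unfolding avoids_antipower3_def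
    using sublist_order.order_trans[OF _ sublist_butlast] by blast
  moreover have "avoids_antipower3 (tl v)" using av unfolding avoids_antipower3_def
    using sublist_order.order_trans[OF _ sublist_tl] by blast
  moreover have "\<not> antipower3 v" using av unfolding avoids_antipower3_def by blast
  ultimately show "length v = Suc n \<and> butlast v \<in> A n \<and> tl v \<in> A n \<and> \<not> antipower3 v"
    using l unfolding A_def by simp
next
  assume h: "length v = Suc n \<and> butlast v \<in> A n \<and> tl v \<in> A n \<and> \<not> antipower3 v"
  have "avoids_antipower3 v" unfolding avoids_antipower3_def
  proof
    assume "\<exists>u. sublist u v \<and> antipower3 u"
    then obtain u where u: "sublist u v" "antipower3 u" by blast
    from sub3[OF u(1)] show False
      using h u(2) unfolding A_def avoids_antipower3_def by auto
  qed
  then show "v \<in> A (Suc n)" using h unfolding A_def by simp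
qed

lemma base_A12: "A 12 = B 12"
  unfolding A_iter B_def by (rule base12)

lemma A_eq_B: "n \<ge> 12 \<Longrightarrow> A n = B n"
proof (induction n rule: nat_induct_at_least)
  case base then show ?case by (rule base_A12)
next
  case (Suc n)
  show ?case
  proof (intro set_eqI iffI)
    fix v assume "v \<in> A (Suc n)"
    then show "v \<in> B (Suc n)" using step3[OF Suc.hyps(1)] Suc.IH unfolding A_Suc by blast
  next
    fix v assume v: "v \<in> B (Suc n)"
    then show "v \<in> A (Suc n)" using B_restrict[OF Suc.hyps(1) v] Suc.IH length_B[OF v] unfolding A_Suc by blast
  qed
qed

lemma distinct_Sl: "n \<ge> 12 \<Longrightarrow> distinct (Sl n r)"
  unfolding Sl_def by (cases "r = 0"; cases "r = 2") (auto simp: distinct_map inj_on_def)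

lemma length_Sl: "length (Sl n r) = n + 5 + (if r \<noteq> 0 then 1 else 0) + (if r = 2 then 4 else 0)"
  unfolding Sl_def by simp

lemma inj_ofl: "n \<ge> 12 \<Longrightarrow> inj_on (ofl n) (set (Sl n r))"
proof (rule inj_onI)
  fix P P' assume n: "n \<ge> 12" and h: "P \<in> set (Sl n r)" "P' \<in> set (Sl n r)" "ofl n P = ofl n P'"
  show "P = P'" using ofl_inj[OF _ _ _ _ h(3)] Sl_props[OF n h(1)] Sl_props[OF n h(2)] by blast
qed

lemma altw_ne: "n > 0 \<Longrightarrow> altw n False \<noteq> altw n True"
proof
  assume "n > 0" "altw n False = altw n True"
  then have "altw n False ! 0 = altw n True ! 0" by simp
  then show False using \<open>n > 0\<close> by simp
qed

lemma distinct_Blist: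
  assumes "n \<ge> 12"
  shows "distinct (Blist n)"
proof -
  have S: "distinct (Slist n)" "inj_on (ofl n) (set (Slist n))" unfolding Slist_Sl
    using distinct_Sl inj_ofl assms by auto
  have o1: "ones (ofl n P) \<le> 3" if "P \<in> set (Slist n)" for P
    using ones_ofl[of n P] Sl_props[OF assms, of P "n mod 3"] that by (simp add: Slist_Sl)
  have o2: "n \<le> ones (map Not (ofl n P)) + 3" if "P \<in> set (Slist n)" for P
    using o1[OF that] ones_Not[of "ofl n P"] by simp
  have alt: "6 \<le> ones (altw n b) \<and> ones (altw n b) + 6 \<le> n" for b
    using ones_altw[of n b] assms by linarith
  have nn: "map Not (map Not x) = x" for x :: "bool list" by (simp add: comp_def)
  have inj2: "inj_on (\<lambda>P. map Not (ofl n P)) (set (Slist n))"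
  proof (rule inj_onI)
    fix P P' assume h: "P \<in> set (Slist n)" "P' \<in> set (Slist n)" "map Not (ofl n P) = map Not (ofl n P')"
    then have "ofl n P = ofl n P'" using nn by metis
    then show "P = P'" using S(2) h(1,2) by (simp add: inj_on_eq_iff)
  qed
  have ne1: "altw n b \<noteq> ofl n P" if "P \<in> set (Slist n)" for b P
  proof
    assume "altw n b = ofl n P"
    then have "ones (altw n b) = ones (ofl n P)" by simp
    then show False using alt[of b] o1[OF that] by linarith
  qed
  have ne2: "altw n b \<noteq> map Not (ofl n P)" if "P \<in> set (Slist n)" for b P
  proof
    assume "altw n b = map Not (ofl n P)"
    then have "ones (altw n b) = ones (map Not (ofl n P))" by simp
    then show False using alt[of b] o2[OF that] by linarith
  qed
  have ne3: "ofl n P' \<noteq> map Not (ofl n P)" if "P \<in> set (Slist n)" "P' \<in> set (Slist n)" for P P'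
  proof
    assume "ofl n P' = map Not (ofl n P)"
    then have "ones (ofl n P') = ones (map Not (ofl n P))" by simp
    then show False using o1[OF that(2)] o2[OF that(1)] assms by linarith
  qed
  have a1: "distinct [altw n False, altw n True]" using altw_ne[of n] assms by simp
  have a2: "distinct (map (ofl n) (Slist n))" using S by (simp add: distinct_map)
  have a3: "distinct (map (\<lambda>P. map Not (ofl n P)) (Slist n))" using S(1) inj2 by (simp add: distinct_map)
  have a4: "set [altw n False, altw n True] \<inter> set (map (ofl n) (Slist n) @ map (\<lambda>P. map Not (ofl n P)) (Slist n)) = {}"
    using ne1 ne2 by auto
  have a5: "set (map (ofl n) (Slist n)) \<inter> set (map (\<lambda>P. map Not (ofl n P)) (Slist n)) = {}"
    using ne3 by auto
  show ?thesis unfolding Blist_def distinct_append using a1 a2 a3 a4 a5 by blast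
qed

lemma card_B: "n \<ge> 12 \<Longrightarrow> card (B n) = 2*n + 12 + (if n mod 3 \<noteq> 0 then 2 else 0) + (if n mod 3 = 2 then 8 else 0)"
proof -
  assume n: "n \<ge> 12"
  have "card (B n) = length (Blist n)" unfolding B_def by (rule distinct_card[OF distinct_Blist[OF n]])
  also have "\<dots> = 2 + 2 * length (Slist n)" by (simp add: Blist_def)
  also have "\<dots> = 2*n + 12 + (if n mod 3 \<noteq> 0 then 2 else 0) + (if n mod 3 = 2 then 8 else 0)"
    unfolding Slist_Sl length_Sl by simp
  finally show ?thesis .
qed

lemma pow_single: "pow [b] m = replicate m b"
  by (induction m) (simp_all add: pow_def)

lemma nth_pow01: "k < 2*m \<Longrightarrow> pow [False, True] m ! k = odd k"
proof (induction m arbitrary: k)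
  case 0 then show ?case by simp
next
  case (Suc m)
  have e: "pow [False, True] (Suc m) = False # True # pow [False, True] m" by (simp add: pow_def)
  show ?case
  proof (cases k)
    case 0 then show ?thesis using e by simp
  next
    case (Suc k')
    show ?thesis
    proof (cases k')
      case 0 then show ?thesis using e Suc by simp
    next
      case (Suc k'')
      then show ?thesis using e \<open>k = Suc k'\<close> Suc.IH[of k''] Suc.prems by simp
    qed
  qed
qed

lemma length_pow: "length (pow w m) = m * length w"
  by (induction m) (simp_all add: pow_def)

lemma word_eq_ofl: "length w = n \<Longrightarrow> (\<And>k. k < n \<Longrightarrow> w ! k = (k \<in> set P)) \<Longrightarrow> w = ofl n P"
  by (rule nth_equalityI) simp_all

lemma word_eq_altw: "length w = n \<Longrightarrow> (\<And>k. k < n \<Longrightarrow> w ! k = (if even k then b else \<not> b)) \<Longrightarrow> w = altw n b"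
  by (rule nth_equalityI) simp_all

lemma c_0s: "{w \<in> L_0s. length w = n} = {ofl n []}"
proof -
  have "replicate n False = ofl n []" by (rule word_eq_ofl) simp_all
  moreover have "{w \<in> L_0s. length w = n} = {replicate n False}" unfolding L_0s_def pow_single by auto
  ultimately show ?thesis by simp
qed

lemma c_01: "{w \<in> L_01s \<union> L_01s0. length w = n} = {altw n False}"
proof -
  have a: "pow [False, True] m = altw (2*m) False" for m
    by (rule word_eq_altw) (simp_all add: length_pow nth_pow01)
  have b: "pow [False, True] m @ [False] = altw (2*m+1) False" for m
  proof (rule word_eq_altw)
    show "length (pow [False, True] m @ [False]) = 2*m+1" by (simp add: length_pow)
  next
    fix k assume k: "k < 2*m+1"
    show "(pow [False, True] m @ [False]) ! k = (if even k then False else \<not> False)"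
    proof (cases "k < 2*m")
      case True then show ?thesis by (simp add: nth_append length_pow nth_pow01)
    next
      case False then have "k = 2*m" using k by linarith
      then show ?thesis by (simp add: nth_append length_pow)
    qed
  qed
  show ?thesis
  proof (intro set_eqI iffI)
    fix w assume "w \<in> {w \<in> L_01s \<union> L_01s0. length w = n}"
    then show "w \<in> {altw n False}" unfolding L_01s_def L_01s0_def using a b by auto
  next
    fix w assume "w \<in> {altw n False}"
    then have w: "w = altw n False" by simp
    show "w \<in> {w \<in> L_01s \<union> L_01s0. length w = n}"
    proof (cases "even n")
      case True
      then obtain m where "n = 2*m" by blast
      then show ?thesis unfolding L_01s_def w using a by auto
    next
      case False
      then obtain m where "n = 2*m+1" using oddE by blast
      then show ?thesis unfolding L_01s0_def w using b by auto
    qed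
  qed
qed

lemma c_0s10s: "{w \<in> L_0s10s. length w = n} = (\<lambda>i. ofl n [i]) ` {..<n}"
proof -
  have a: "replicate i False @ [True] @ replicate j False = ofl (i+j+1) [i]" for i j
    by (rule word_eq_ofl) (auto simp: nth_append nth_Cons')
  show ?thesis
  proof (intro set_eqI iffI)
    fix w assume "w \<in> {w \<in> L_0s10s. length w = n}"
    then obtain i j where "w = replicate i False @ [True] @ replicate j False" "length w = n"
      unfolding L_0s10s_def pow_single by auto
    then show "w \<in> (\<lambda>i. ofl n [i]) ` {..<n}" using a[of i j] by auto
  next
    fix w assume "w \<in> (\<lambda>i. ofl n [i]) ` {..<n}"
    then obtain i where i: "i < n" "w = ofl n [i]" by auto
    then have "w = replicate i False @ [True] @ replicate (n-i-1) False" using a[of i "n-i-1"] by simp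
    then show "w \<in> {w \<in> L_0s10s. length w = n}" unfolding L_0s10s_def pow_single using i by auto
  qed
qed

lemma c_0s011:
  assumes "n \<ge> 3"
  shows "{w \<in> L_0s011. length w = n} = {ofl n [n-2,n-1]}"
proof -
  obtain i where n: "n = i + 3" using assms by (metis le_add_diff_inverse2)
  have a: "replicate i False @ [False,True,True] = ofl (i+3) [i+1,i+2]" for i
    by (rule word_eq_ofl) (auto simp: nth_append nth_Cons')
  have t: "ofl n [n-2,n-1] = ofl (i+3) [i+1,i+2]" unfolding n by (simp add: numeral_eq_Suc)
  show ?thesis
  proof (intro set_eqI iffI)
    fix w assume "w \<in> {w \<in> L_0s011. length w = n}"
    then obtain j where w: "w = replicate j False @ [False,True,True]" "length w = n" unfolding L_0s011_def pow_single by auto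
    then have "j = i" using n by simp
    then show "w \<in> {ofl n [n-2,n-1]}" using a t w(1) by simp
  next
    fix w assume "w \<in> {ofl n [n-2,n-1]}"
    then have "w = replicate i False @ [False,True,True]" using a t by simp
    then show "w \<in> {w \<in> L_0s011. length w = n}" unfolding L_0s011_def pow_single using n by auto
  qed
qed

lemma c_0s101:
  assumes "n \<ge> 3"
  shows "{w \<in> L_0s101. length w = n} = {ofl n [n-3,n-1]}"
proof -
  obtain i where n: "n = i + 3" using assms by (metis le_add_diff_inverse2)
  have a: "replicate i False @ [True,False,True] = ofl (i+3) [i,i+2]" for i
    by (rule word_eq_ofl) (auto simp: nth_append nth_Cons')
  have t: "ofl n [n-3,n-1] = ofl (i+3) [i,i+2]" unfolding n by (simp add: numeral_eq_Suc)
  show ?thesis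
  proof (intro set_eqI iffI)
    fix w assume "w \<in> {w \<in> L_0s101. length w = n}"
    then obtain j where w: "w = replicate j False @ [True,False,True]" "length w = n" unfolding L_0s101_def pow_single by auto
    then have "j = i" using n by simp
    then show "w \<in> {ofl n [n-3,n-1]}" using a t w(1) by simp
  next
    fix w assume "w \<in> {ofl n [n-3,n-1]}"
    then have "w = replicate i False @ [True,False,True]" using a t by simp
    then show "w \<in> {w \<in> L_0s101. length w = n}" unfolding L_0s101_def pow_single using n by auto
  qed
qed

lemma c_10s1:
  assumes "n \<ge> 2"
  shows "{w \<in> L_10s1. length w = n} = {ofl n [0,n-1]}"
proof -
  obtain i where n: "n = i + 2" using assms by (metis le_add_diff_inverse2)
  have a: "[True] @ replicate i False @ [True] = ofl (i+2) [0,i+1]" for i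
    by (rule word_eq_ofl) (auto simp: nth_append nth_Cons')
  have t: "ofl n [0,n-1] = ofl (i+2) [0,i+1]" unfolding n by (simp add: numeral_eq_Suc)
  show ?thesis
  proof (intro set_eqI iffI)
    fix w assume "w \<in> {w \<in> L_10s1. length w = n}"
    then obtain j where w: "w = [True] @ replicate j False @ [True]" "length w = n" unfolding L_10s1_def pow_single by auto
    then have "j = i" using n by simp
    then show "w \<in> {ofl n [0,n-1]}" using a t w(1) by simp
  next
    fix w assume "w \<in> {ofl n [0,n-1]}"
    then have "w = [True] @ replicate i False @ [True]" using a t by simp
    then show "w \<in> {w \<in> L_10s1. length w = n}" unfolding L_10s1_def pow_single using n by auto
  qed
qed

lemma c_10s10:
  assumes "n \<ge> 3"
  shows "{w \<in> L_10s10. length w = n} = {ofl n [0,n-2]}"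
proof -
  obtain i where n: "n = i + 3" using assms by (metis le_add_diff_inverse2)
  have a: "[True] @ replicate i False @ [True,False] = ofl (i+3) [0,i+1]" for i
    by (rule word_eq_ofl) (auto simp: nth_append nth_Cons')
  have t: "ofl n [0,n-2] = ofl (i+3) [0,i+1]" unfolding n by (simp add: numeral_eq_Suc)
  show ?thesis
  proof (intro set_eqI iffI)
    fix w assume "w \<in> {w \<in> L_10s10. length w = n}"
    then obtain j where w: "w = [True] @ replicate j False @ [True,False]" "length w = n" unfolding L_10s10_def pow_single by auto
    then have "j = i" using n by simp
    then show "w \<in> {ofl n [0,n-2]}" using a t w(1) by simp
  next
    fix w assume "w \<in> {ofl n [0,n-2]}"
    then have "w = [True] @ replicate i False @ [True,False]" using a t by simp
    then show "w \<in> {w \<in> L_10s10. length w = n}" unfolding L_10s10_def pow_single using n by auto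
  qed
qed

lemma c_10s11:
  assumes "n \<ge> 3"
  shows "{w \<in> L_10s11. length w = n} = {ofl n [0,n-2,n-1]}"
proof -
  obtain i where n: "n = i + 3" using assms by (metis le_add_diff_inverse2)
  have a: "[True] @ replicate i False @ [True,True] = ofl (i+3) [0,i+1,i+2]" for i
    by (rule word_eq_ofl) (auto simp: nth_append nth_Cons')
  have t: "ofl n [0,n-2,n-1] = ofl (i+3) [0,i+1,i+2]" unfolding n by (simp add: numeral_eq_Suc)
  show ?thesis
  proof (intro set_eqI iffI)
    fix w assume "w \<in> {w \<in> L_10s11. length w = n}"
    then obtain j where w: "w = [True] @ replicate j False @ [True,True]" "length w = n" unfolding L_10s11_def pow_single by auto
    then have "j = i" using n by simp
    then show "w \<in> {ofl n [0,n-2,n-1]}" using a t w(1) by simp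
  next
    fix w assume "w \<in> {ofl n [0,n-2,n-1]}"
    then have "w = [True] @ replicate i False @ [True,True]" using a t by simp
    then show "w \<in> {w \<in> L_10s11. length w = n}" unfolding L_10s11_def pow_single using n by auto
  qed
qed

definition rp :: "nat \<Rightarrow> nat list \<Rightarrow> nat list" where
  "rp n P = rev (map (\<lambda>p. n - 1 - p) P)"

lemma rev_ofl: "\<forall>p\<in>set P. p < n \<Longrightarrow> rev (ofl n P) = ofl n (rp n P)"
proof (rule word_eq_ofl)
  fix k assume P: "\<forall>p\<in>set P. p < n" and k: "k < n"
  have "rev (ofl n P) ! k = ofl n P ! (n - Suc k)" using k by (simp add: rev_nth)
  also have "\<dots> = (n - Suc k \<in> set P)" using k by simp
  also have "\<dots> = (k \<in> set (rp n P))"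
  proof
    assume "n - Suc k \<in> set P"
    moreover have "k = n - 1 - (n - Suc k)" using k by simp
    ultimately show "k \<in> set (rp n P)" unfolding rp_def by (auto intro: image_eqI)
  next
    assume "k \<in> set (rp n P)"
    then obtain p where p: "p \<in> set P" "k = n - 1 - p" unfolding rp_def by auto
    then have "p < n" using P by auto
    then have "n - Suc k = p" using p(2) by simp
    then show "n - Suc k \<in> set P" using p(1) by simp
  qed
  finally show "rev (ofl n P) ! k = (k \<in> set (rp n P))" .
qed simp

lemma rev_altw: "rev (altw n b) = altw n (if even n then \<not> b else b)"
proof (rule word_eq_altw)
  fix k assume k: "k < n"
  have e: "rev (altw n b) ! k = (if even (n - Suc k) then b else \<not> b)" using k by (simp add: rev_nth)
  have p: "even (n - Suc k) \<longleftrightarrow> (even n \<longleftrightarrow> odd k)" using k by presburger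
  show "rev (altw n b) ! k = (if even k then (if even n then \<not> b else b) else \<not> (if even n then \<not> b else b))"
    unfolding e using p by (cases "even n"; cases "even k") simp_all
qed simp

lemma Cl_gen:
  assumes L: "{w \<in> L. length w = n} = {altw n False} \<union> ofl n ` P0"
    and bnd: "\<forall>P\<in>P0. \<forall>p\<in>set P. p < n"
    and S: "P0 \<union> rp n ` P0 = set (Slist n)"
  shows "Cl n L = B n"
proof -
  let ?O = "ofl n ` P0"
  have r: "rev ` ?O = ofl n ` (rp n ` P0)"
    unfolding image_image by (rule image_cong) (simp_all add: rev_ofl bnd)
  have B: "B n = {altw n False, altw n True} \<union> ofl n ` (P0 \<union> rp n ` P0) \<union> (map Not \<circ> ofl n) ` (P0 \<union> rp n ` P0)"
    unfolding B_def Blist_def S by (auto simp: comp_def)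
  have ra: "{altw n (if even n then \<not> False else False), altw n (\<not> (if even n then \<not> False else False))} = {altw n False, altw n True}"
    by auto
  have "Cl n L = ({altw n False} \<union> ?O) \<union> map Not ` ({altw n False} \<union> ?O) \<union> rev ` ({altw n False} \<union> ?O)
     \<union> (map Not \<circ> rev) ` ({altw n False} \<union> ?O)"
    unfolding Cl_def Let_def L complement_def[abs_def] by (simp add: comp_def)
  also have "\<dots> = {altw n False, altw n True, altw n (if even n then \<not> False else False), altw n (\<not> (if even n then \<not> False else False))}
     \<union> ?O \<union> map Not ` ?O \<union> ofl n ` (rp n ` P0) \<union> map Not ` ofl n ` (rp n ` P0)"
    unfolding image_Un image_comp[symmetric] r by (auto simp: Not_altw rev_altw)
  also have "\<dots> = B n" unfolding B ra image_Un by (auto simp: image_comp)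
  finally show ?thesis .
qed

definition P0 :: "nat \<Rightarrow> nat \<Rightarrow> nat list set" where
  "P0 r n = {[]} \<union> (\<lambda>i. [i]) ` {..<n} \<union> {[n-2,n-1],[n-3,n-1]}
     \<union> (if r \<noteq> 0 then {[0,n-1]} else {}) \<union> (if r = 2 then {[0,n-2],[0,n-2,n-1]} else {})"

lemma P0_bnd: "n \<ge> 12 \<Longrightarrow> \<forall>P\<in>P0 r n. \<forall>p\<in>set P. p < n"
  unfolding P0_def by auto

lemma rev_singles: "(\<lambda>i. [n - 1 - i]) ` {..<n} = (\<lambda>i. [i]) ` {..<(n::nat)}"
proof (intro set_eqI iffI)
  fix x assume "x \<in> (\<lambda>i. [n - 1 - i]) ` {..<n}"
  then obtain i where i: "i < n" "x = [n - 1 - i]" by auto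
  have "n - 1 - i < n" using i(1) by arith
  then show "x \<in> (\<lambda>i. [i]) ` {..<n}" using i(2) by (intro image_eqI[of _ _ "n - 1 - i"]) simp_all
next
  fix x assume "x \<in> (\<lambda>i. [i]) ` {..<n}"
  then obtain i where i: "i < n" "x = [i]" by auto
  then have "x = [n - 1 - (n - 1 - i)]" "n - 1 - i < n" by auto
  then show "x \<in> (\<lambda>i. [n - 1 - i]) ` {..<n}" by blast
qed

lemma rp_P0: "n \<ge> 12 \<Longrightarrow> P0 r n \<union> rp n ` P0 r n = set (Sl n r)"
proof -
  assume n: "n \<ge> 12"
  have im: "rp n ` ((\<lambda>i. [i]) ` {..<n}) = (\<lambda>i. [i]) ` {..<n}"
    unfolding image_image rp_def using rev_singles[of n] by simp
  have e: "rp n [] = []" "rp n [n-2,n-1] = [0,1]" "rp n [n-3,n-1] = [0,2]" "rp n [0,n-1] = [0,n-1]"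
    "rp n [0,n-2] = [1,n-1]" "rp n [0,n-2,n-1] = [0,1,n-1]"
    using n by (simp_all add: rp_def)
  consider (z) "r = 0" | (t) "r = 2" | (o) "r \<noteq> 0" "r \<noteq> 2" by blast
  then show ?thesis
  proof cases
    case z
    have p: "P0 r n = {[]} \<union> (\<lambda>i. [i]) ` {..<n} \<union> {[n-2,n-1],[n-3,n-1]}" unfolding P0_def using z by simp
    have q: "set (Sl n r) = {[]} \<union> (\<lambda>i. [i]) ` {..<n} \<union> {[n-2,n-1],[n-3,n-1],[0,1],[0,2]}" unfolding Sl_def using z by (auto simp: atLeast0LessThan)
    show ?thesis unfolding p q image_Un image_insert image_empty im e by blast
  next
    case t
    have p: "P0 r n = {[]} \<union> (\<lambda>i. [i]) ` {..<n} \<union> {[n-2,n-1],[n-3,n-1]} \<union> {[0,n-1]} \<union> {[0,n-2],[0,n-2,n-1]}" unfolding P0_def using t by simp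
    have q: "set (Sl n r) = {[]} \<union> (\<lambda>i. [i]) ` {..<n} \<union> {[n-2,n-1],[n-3,n-1],[0,1],[0,2]} \<union> {[0,n-1]} \<union> {[0,n-2],[1,n-1],[0,n-2,n-1],[0,1,n-1]}" unfolding Sl_def using t by (auto simp: atLeast0LessThan)
    show ?thesis unfolding p q image_Un image_insert image_empty im e by blast
  next
    case o
    have p: "P0 r n = {[]} \<union> (\<lambda>i. [i]) ` {..<n} \<union> {[n-2,n-1],[n-3,n-1]} \<union> {[0,n-1]}" unfolding P0_def using o by simp
    have q: "set (Sl n r) = {[]} \<union> (\<lambda>i. [i]) ` {..<n} \<union> {[n-2,n-1],[n-3,n-1],[0,1],[0,2]} \<union> {[0,n-1]}" unfolding Sl_def using o by (auto simp: atLeast0LessThan)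
    show ?thesis unfolding p q image_Un image_insert image_empty im e by blast
  qed
qed

lemma Collect_Un2: "{w \<in> X \<union> Y. Q w} = {w \<in> X. Q w} \<union> {w \<in> Y. Q w}" by blast

lemma lang0: "n \<ge> 3 \<Longrightarrow> {w \<in> Lang0. length w = n} = {altw n False} \<union> ofl n ` P0 0 n"
proof -
  assume n: "n \<ge> 3"
  have "{w \<in> Lang0. length w = n} = {w \<in> L_0s. length w = n} \<union> {w \<in> L_01s \<union> L_01s0. length w = n}
     \<union> {w \<in> L_0s10s. length w = n} \<union> {w \<in> L_0s011. length w = n} \<union> {w \<in> L_0s101. length w = n}"
    unfolding Lang0_def by blast
  also have "\<dots> = {altw n False} \<union> ofl n ` P0 0 n"
    unfolding c_0s c_01 c_0s10s c_0s011[OF n] c_0s101[OF n] P0_def image_Un image_insert image_empty image_image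
    by auto
  finally show ?thesis .
qed

lemma lang1: "n \<ge> 3 \<Longrightarrow> {w \<in> Lang1. length w = n} = {altw n False} \<union> ofl n ` P0 1 n"
proof -
  assume n: "n \<ge> 3"
  have n2: "n \<ge> 2" using n by simp
  have "{w \<in> Lang1. length w = n} = {w \<in> Lang0. length w = n} \<union> {w \<in> L_10s1. length w = n}"
    unfolding Lang1_def by blast
  also have "\<dots> = {altw n False} \<union> ofl n ` P0 1 n"
    using n unfolding lang0[OF n] c_10s1[OF n2] P0_def by auto
  finally show ?thesis .
qed

lemma lang2: "n \<ge> 3 \<Longrightarrow> {w \<in> Lang2. length w = n} = {altw n False} \<union> ofl n ` P0 2 n"
proof -
  assume n: "n \<ge> 3"
  have "{w \<in> Lang2. length w = n} = {w \<in> Lang1. length w = n} \<union> {w \<in> L_10s10. length w = n} \<union> {w \<in> L_10s11. length w = n}"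
    unfolding Lang2_def by blast
  also have "\<dots> = {altw n False} \<union> ofl n ` P0 2 n"
    unfolding lang1[OF n] c_10s10[OF n] c_10s11[OF n] P0_def using n by auto
  finally show ?thesis .
qed

lemma Cl_B:
  assumes "n \<ge> 12"
  shows "n mod 3 = 0 \<Longrightarrow> Cl n Lang0 = B n" "n mod 3 = 1 \<Longrightarrow> Cl n Lang1 = B n" "n mod 3 = 2 \<Longrightarrow> Cl n Lang2 = B n"
proof -
  have n3: "n \<ge> 3" using assms by simp
  show "n mod 3 = 0 \<Longrightarrow> Cl n Lang0 = B n"
    by (rule Cl_gen[OF lang0[OF n3] P0_bnd[OF assms]]) (simp add: rp_P0[OF assms] Slist_Sl)
  show "n mod 3 = 1 \<Longrightarrow> Cl n Lang1 = B n"
    by (rule Cl_gen[OF lang1[OF n3] P0_bnd[OF assms]]) (simp add: rp_P0[OF assms] Slist_Sl)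
  show "n mod 3 = 2 \<Longrightarrow> Cl n Lang2 = B n"
    by (rule Cl_gen[OF lang2[OF n3] P0_bnd[OF assms]]) (simp add: rp_P0[OF assms] Slist_Sl)
qed

theorem corollary5:
  fixes k :: nat
  assumes "k \<ge> 6"
  shows "A (3*k) = Cl (3*k) Lang0 \<and>
         A (3*k+1) = Cl (3*k+1) Lang1 \<and>
         A (3*k+2) = Cl (3*k+2) Lang2 \<and>
         card (A (3*k)) = 6*k+12 \<and>
         card (A (3*k+1)) = 6*k+16 \<and>
         card (A (3*k+2)) = 6*k+26"
proof -
  have n0: "3*k \<ge> 12" "3*k+1 \<ge> 12" "3*k+2 \<ge> 12" using assms by simp_all
  have m: "(3*k) mod 3 = 0" "(3*k+1) mod 3 = 1" "(3*k+2) mod 3 = 2" by presburger+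
  have e0: "A (3*k) = B (3*k)" "A (3*k+1) = B (3*k+1)" "A (3*k+2) = B (3*k+2)"
    using A_eq_B n0 by blast+
  have c0: "Cl (3*k) Lang0 = B (3*k)" by (rule Cl_B(1)[OF n0(1) m(1)])
  have c1: "Cl (3*k+1) Lang1 = B (3*k+1)" by (rule Cl_B(2)[OF n0(2) m(2)])
  have c2: "Cl (3*k+2) Lang2 = B (3*k+2)" by (rule Cl_B(3)[OF n0(3) m(3)])
  have k0: "card (B (3*k)) = 6*k+12" using card_B[OF n0(1)] m(1) by simp
  have k1: "card (B (3*k+1)) = 6*k+16" using card_B[OF n0(2)] m(2) by simp
  have k2: "card (B (3*k+2)) = 6*k+26" using card_B[OF n0(3)] m(3) by simp
  show ?thesis using e0 c0 c1 c2 k0 k1 k2 by simp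
qed

end
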